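(* For any odd prime $p$ and any non-negative integer $k$, \[ B^{(-k)}_{p-1}\equiv\begin{cases}1\pmod p & \text{if } k=0 \text{ or } k\not\equiv 0\pmod{p-1},\\ 2\pmod p & \text{if } k\neq 0 \text{ and } k\equiv 0\pmod{p-1}.\end{cases} \]
   Context: For any integer $k$, let $\mathrm{Li}_k(t)=\sum_{n=1}^{\infty} t^n/n^k$. The poly-Bernoulli numbers $B^{(k)}_n$ ($n\ge 0$) are defined by $\frac{\mathrm{Li}_k(1-e^{-t})}{1-e^{-t}}=\sum_{n=0}^{\infty}B^{(k)}_n\frac{t^n}{n!}$. For non-positive upper index these are integers. *)

theory Defs
  imports "HOL-Computational_Algebra.Formal_Power_Series" "HOL-Number_Theory.Number_Theory"
begin

definition polylog_fps :: "int \<Rightarrow> real fps" where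
  "polylog_fps k = Abs_fps (\<lambda>n. if n = 0 then 0 else 1 / (real n powi k))"

definition poly_bernoulli :: "int \<Rightarrow> nat \<Rightarrow> real" where
  "poly_bernoulli k n =
     fact n * fps_nth (fps_compose (polylog_fps k) (1 - fps_exp (-1))
                        / (1 - fps_exp (-1))) n"

end

theory Submission
  imports Defs
begin
unbundle fps_syntax



lemma polylog_neg: "polylog_fps (- int k) = fps_X * Abs_fps (\<lambda>m. real (Suc m) ^ k)"
  by (rule fps_ext) (auto simp: polylog_fps_def power_int_minus inverse_eq_divide)

lemma a1: "(- fps_exp (-1::real)) ^ i = fps_const ((-1)^i) * fps_exp (- real i)"
proof -
  have "(- fps_exp (-1::real)) ^ i = (-1) ^ i * (fps_exp (-1)) ^ i" by (rule power_minus)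
  also have "(fps_exp (-1::real)) ^ i = fps_exp (- real i)" by (simp add: fps_exp_power_mult)
  also have "(-1::real fps) ^ i = fps_const ((-1)^i)" 
  proof -
    have "(-1::real fps) = fps_const (-1)" by (rule fps_ext) simp
    then show ?thesis by (simp only: fps_const_power)
  qed
  finally show ?thesis .
qed

lemma a2: "((- fps_exp (-1::real)) ^ i) $ n = (-1)^i * (- real i)^n / fact n"
  unfolding a1 by simp

lemma E_pow_nth:
  "fact n * ((1 - fps_exp (-1::real)) ^ m) $ n = (\<Sum>i\<le>m. (-1)^i * real (m choose i) * (- real i)^n)"
proof -
  have "(1 - fps_exp (-1::real)) ^ m = (- fps_exp (-1) + 1) ^ m" by simp
  also have "\<dots> = (\<Sum>i\<le>m. of_nat (m choose i) * (- fps_exp (-1)) ^ i * 1 ^ (m - i))"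
    by (rule binomial_ring)
  also have "\<dots> = (\<Sum>i\<le>m. fps_const (real (m choose i)) * (- fps_exp (-1)) ^ i)"
    by (simp add: fps_of_nat)
  finally have "((1 - fps_exp (-1::real)) ^ m) $ n = (\<Sum>i\<le>m. real (m choose i) * ((- fps_exp (-1)) ^ i $ n))"
    by (simp only: fps_sum_nth fps_mult_left_const_nth)
  also have "\<dots> = (\<Sum>i\<le>m. (-1)^i * real (m choose i) * (- real i)^n / fact n)"
    by (simp only: a2) (simp add: field_simps)
  finally show ?thesis by (simp add: sum_distrib_left)
qed

lemma pb_formula:
  "poly_bernoulli (- int k) n = (\<Sum>m=0..n. real (Suc m)^k * (\<Sum>i\<le>m. (-1)^i * real (m choose i) * (- real i)^n))"
proof -
  define E :: "real fps" where "E = 1 - fps_exp (-1)"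
  define A :: "real fps" where "A = Abs_fps (\<lambda>m. real (Suc m) ^ k)"
  have E0: "E $ 0 = 0" by (simp add: E_def)
  have E1: "E \<noteq> 0"
  proof
    assume "E = 0"
    then have "E $ 1 = 0" by simp
    then show False by (simp add: E_def)
  qed
  have "fps_compose (polylog_fps (- int k)) E = (fps_X oo E) * (A oo E)"
    unfolding polylog_neg A_def by (rule fps_compose_mult_distrib[OF E0])
  also have "\<dots> = (A oo E) * E" using E0 by simp
  finally have "fps_compose (polylog_fps (- int k)) E / E = A oo E"
    using E1 by (simp add: fps_divide_times_eq)
  then have "poly_bernoulli (- int k) n = fact n * (A oo E) $ n"
    by (simp add: poly_bernoulli_def E_def)
  also have "\<dots> = (\<Sum>m=0..n. real (Suc m)^k * (fact n * (E ^ m) $ n))"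
    by (simp add: fps_compose_nth A_def sum_distrib_left mult_ac)
  also have "\<dots> = (\<Sum>m=0..n. real (Suc m)^k * (\<Sum>i\<le>m. (-1)^i * real (m choose i) * (- real i)^n))"
    unfolding E_def E_pow_nth ..
  finally show ?thesis .
qed



lemma powsum_nondvd:
  fixes p k :: nat
  assumes p: "prime p" and nd: "\<not> (p - 1) dvd k"
  shows "p dvd (\<Sum>j=1..p-1. j ^ k)"
proof -
  obtain g where g: "residue_primroot p g" using prime_primitive_root_exists[of p] p prime_gt_1_nat by blast
  have ordg: "ord p g = p - 1" and cop: "coprime p g"
    using g p by (auto simp: residue_primroot_def totient_prime)
  have p1: "p > 1" using p prime_gt_1_nat by blast
  define A where "A = {1..p-1}"
  define f where "f j = g * j mod p" for j
  have inj: "inj_on f A"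
  proof (rule inj_onI)
    fix a b assume ab: "a \<in> A" "b \<in> A" "f a = f b"
    then have "[g * a = g * b] (mod p)" by (simp add: f_def cong_def)
    then have "[a = b] (mod p)" using cop by (simp add: cong_mult_lcancel_nat coprime_commute)
    then show "a = b" using ab p1 by (intro cong_less_modulus_unique_nat) (auto simp: A_def)
  qed
  have sub: "f ` A \<subseteq> A"
  proof
    fix y assume "y \<in> f ` A"
    then obtain j where j: "j \<in> A" "y = f j" by blast
    have "\<not> p dvd g" using cop p1
      by (metis coprime_common_divisor_nat dvd_refl nat_neq_iff)
    moreover have "\<not> p dvd j" using j p1 by (auto simp: A_def dest: dvd_imp_le)
    ultimately have "\<not> p dvd g * j" using p by (simp add: prime_dvd_mult_iff)
    then have "y \<noteq> 0" using j by (simp add: f_def dvd_eq_mod_eq_0)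
    moreover have "y < p" using j p1 by (simp add: f_def)
    ultimately show "y \<in> A" by (auto simp: A_def)
  qed
  have img: "f ` A = A" by (rule endo_inj_surj) (use inj sub in \<open>auto simp: A_def\<close>)
  define T where "T = (\<Sum>j\<in>A. j ^ k)"
  have "T = (\<Sum>j\<in>f ` A. j ^ k)" by (simp add: img T_def)
  also have "\<dots> = (\<Sum>j\<in>A. (f j) ^ k)" by (rule sum.reindex[OF inj, unfolded comp_def])
  finally have "[T = (\<Sum>j\<in>A. (f j) ^ k)] (mod p)" by simp
  moreover have "[(\<Sum>j\<in>A. (f j) ^ k) = (\<Sum>j\<in>A. (g * j) ^ k)] (mod p)"
    by (intro cong_sum cong_pow) (simp add: f_def cong_def)
  moreover have "(\<Sum>j\<in>A. (g * j) ^ k) = g ^ k * T"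
    by (simp add: T_def power_mult_distrib sum_distrib_left)
  ultimately have c: "[T * 1 = T * g ^ k] (mod p)" by (metis cong_trans mult_1_right mult.commute)
  show ?thesis
  proof (rule ccontr)
    assume "\<not> p dvd (\<Sum>j=1..p-1. j ^ k)"
    then have "\<not> p dvd T" by (simp add: T_def A_def)
    then have "coprime T p" using prime_imp_coprime[OF p] coprime_commute by blast
    then have "[1 = g ^ k] (mod p)" using c cong_mult_lcancel_nat[of T p 1 "g ^ k"] by simp
    then have "ord p g dvd k" using ord_divides[of g k p] cong_sym by (metis One_nat_def)
    then show False using ordg nd by simp
  qed
qed

lemma powsum_dvd:
  fixes p k :: nat
  assumes p: "prime p" and d: "(p - 1) dvd k"
  shows "[(\<Sum>j=1..p-1. int j ^ k) = -1] (mod int p)"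
proof -
  obtain r where r: "k = (p - 1) * r" using d by blast
  have "[(\<Sum>j=1..p-1. int j ^ k) = (\<Sum>j=1..p-1. 1)] (mod int p)"
  proof (intro cong_sum)
    fix j assume j: "j \<in> {1..p-1}"
    then have "\<not> p dvd j" by (auto dest: dvd_imp_le)
    then have "[j ^ (p - 1) = 1] (mod p)" using fermat_theorem[OF p] by blast
    then have "[(j ^ (p - 1)) ^ r = 1 ^ r] (mod p)" by (rule cong_pow)
    then have "[j ^ k = 1] (mod p)" by (simp add: r power_mult)
    then show "[int j ^ k = 1] (mod int p)" by (metis cong_int_iff of_nat_1 of_nat_power)
  qed
  moreover have "(\<Sum>j=1..p-1. (1::int)) = int p - 1" using prime_gt_1_nat[OF p] by simp
  moreover have "[int p - 1 = -1] (mod int p)" by (simp add: cong_iff_dvd_diff)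
  ultimately show ?thesis by (metis cong_trans)
qed



lemma inner_cong:
  fixes p m :: nat
  assumes p: "prime p" and odd: "odd p" and m: "m \<le> p - 1"
  shows "[(\<Sum>i\<le>m. (-1)^i * int (m choose i) * (- int i)^(p-1)) = (if m = 0 then 0 else -1)] (mod int p)"
proof -
  have p1: "p > 1" using p prime_gt_1_nat by blast
  have ev: "even (p - 1)" using odd p1 by simp
  have "[(\<Sum>i\<le>m. (-1)^i * int (m choose i) * (- int i)^(p-1)) =
         (\<Sum>i\<le>m. (-1)^i * int (m choose i) * (1 - (if i = 0 then 1 else 0)))] (mod int p)"
  proof (intro cong_sum cong_mult cong_refl)
    fix i assume i: "i \<in> {..m}"
    have e: "(- int i)^(p-1) = int (i^(p-1))" using ev by simp
    show "[(- int i)^(p-1) = 1 - (if i = 0 then 1 else 0)] (mod int p)"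
    proof (cases "i = 0")
      case True then show ?thesis using p1 by (simp add: zero_power)
    next
      case False
      then have "\<not> p dvd i" using i m p1 by (auto dest: dvd_imp_le)
      then have "[i ^ (p - 1) = 1] (mod p)" using fermat_theorem[OF p] by blast
      then have "[int (i ^ (p - 1)) = int 1] (mod int p)" by (simp only: cong_int_iff)
      then show ?thesis using False e by simp
    qed
  qed
  also have "(\<Sum>i\<le>m. (-1)^i * int (m choose i) * (1 - (if i = 0 then 1 else 0))) =
             (\<Sum>i\<le>m. (-1)^i * int (m choose i)) - 1"
  proof -
    have d: "\<And>i. (-1)^i * int (m choose i) * (1 - (if i = 0 then 1 else 0)) = (-1)^i * int (m choose i) - (if i = 0 then 1 else (0::int))"
      by simp
    show ?thesis by (simp only: d sum_subtractf) simp
  qed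
  also have "\<dots> = (if m = 0 then 0 else -1)"
    using choose_alternating_sum[of m, where 'a=int] by auto
  finally show ?thesis .
qed

lemma b_cong:
  fixes p k :: nat
  assumes p: "prime p" and odd: "odd p"
  shows "[(\<Sum>m=0..p-1. int (Suc m)^k * (\<Sum>i\<le>m. (-1)^i * int (m choose i) * (- int i)^(p-1)))
          = (if k = 0 \<or> \<not> [k = 0] (mod (p - 1)) then 1 else 2)] (mod int p)"
proof -
  have p1: "p > 1" using p prime_gt_1_nat by blast
  define T where "T = (\<Sum>j=1..p-1. int j ^ k)"
  have "[(\<Sum>m=0..p-1. int (Suc m)^k * (\<Sum>i\<le>m. (-1)^i * int (m choose i) * (- int i)^(p-1)))
         = (\<Sum>m=0..p-1. int (Suc m)^k * (if m = 0 then 0 else -1))] (mod int p)"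
    by (intro cong_sum cong_mult cong_refl inner_cong[OF p odd]) auto
  also have "(\<Sum>m=0..p-1. int (Suc m)^k * (if m = 0 then 0 else -1)) = 1 - (\<Sum>m=0..p-1. int (Suc m)^k)"
  proof -
    have "(\<Sum>m=0..p-1. int (Suc m)^k * (if m = 0 then 0 else -1)) = 
          (\<Sum>m=0..p-1. int (Suc m)^k * ((if m = 0 then 1 else 0) - 1))"
      by (intro sum.cong) auto
    also have "\<dots> = 1 - (\<Sum>m=0..p-1. int (Suc m)^k)"
    proof -
      have d2: "\<And>m. int (Suc m)^k * ((if m = 0 then 1 else 0) - 1) = (if m = 0 then 1 else 0) - int (Suc m)^k" by simp
      show ?thesis by (simp only: d2 sum_subtractf) simp
    qed
    finally show ?thesis .
  qed
  also have "(\<Sum>m=0..p-1. int (Suc m)^k) = (\<Sum>j=1..p. int j^k)"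
    using sum.shift_bounds_cl_Suc_ivl[of "\<lambda>j. int j^k" 0 "p-1"] p1 by simp
  also have "\<dots> = T + int p ^ k"
  proof -
    have "{1..p} = insert p {1..p-1}" using p1 by auto
    then show ?thesis unfolding T_def using p1 by (simp add: add.commute)
  qed
  finally have c1: "[(\<Sum>m=0..p-1. int (Suc m)^k * (\<Sum>i\<le>m. (-1)^i * int (m choose i) * (- int i)^(p-1)))
         = 1 - (T + int p ^ k)] (mod int p)" .
  show ?thesis
  proof (cases "k = 0")
    case True
    then have "T = int p - 1" using p1 by (simp add: T_def)
    then have eq: "1 - (T + int p ^ k) = 1 - int p" using True by simp
    have c2: "[1 - int p = 1] (mod int p)" by (simp add: cong_iff_dvd_diff)
    show ?thesis using cong_trans[OF c1[unfolded eq] c2] True by simp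
  next
    case False
    have pk: "[int p ^ k = 0] (mod int p)" using False by (simp add: cong_0_iff)
    show ?thesis
    proof (cases "(p - 1) dvd k")
      case True
      have "[T = -1] (mod int p)" unfolding T_def by (rule powsum_dvd[OF p True])
      then have "[1 - (T + int p ^ k) = 1 - (-1 + 0)] (mod int p)"
        by (intro cong_diff cong_add cong_refl pk)
      then have "[1 - (T + int p ^ k) = 2] (mod int p)" by simp
      from cong_trans[OF c1 this] show ?thesis using True False by (simp add: cong_0_iff)
    next
      case nd: False
      have "p dvd (\<Sum>j=1..p-1. j ^ k)" by (rule powsum_nondvd[OF p nd])
      then have "int p dvd int (\<Sum>j=1..p-1. j ^ k)" by (simp only: int_dvd_int_iff)
      moreover have "int (\<Sum>j=1..p-1. j ^ k) = T" by (simp add: T_def)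
      ultimately have "int p dvd T" by simp
      then have "[T = 0] (mod int p)" by (simp add: cong_0_iff)
      then have "[1 - (T + int p ^ k) = 1 - (0 + 0)] (mod int p)"
        by (intro cong_diff cong_add cong_refl pk)
      then have "[1 - (T + int p ^ k) = 1] (mod int p)" by simp
      from cong_trans[OF c1 this] show ?thesis using nd False by (simp add: cong_0_iff)
    qed
  qed
qed


theorem theorem3p1:
  fixes p k :: nat
  assumes "prime p" and "odd p"
  shows "\<exists>b::int. poly_bernoulli (- int k) (p - 1) = of_int b \<and>
           [b = (if k = 0 \<or> \<not> [k = 0] (mod (p - 1)) then 1 else 2)] (mod int p)"
proof (intro exI conjI)
  show "poly_bernoulli (- int k) (p - 1) = of_int (\<Sum>m=0..p-1. int (Suc m)^k * (\<Sum>i\<le>m. (-1)^i * int (m choose i) * (- int i)^(p-1)))"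
    by (simp add: pb_formula)
  show "[(\<Sum>m=0..p-1. int (Suc m)^k * (\<Sum>i\<le>m. (-1)^i * int (m choose i) * (- int i)^(p-1))) = (if k = 0 \<or> \<not> [k = 0] (mod (p - 1)) then 1 else 2)] (mod int p)"
    by (rule b_cong[OF assms])
qed

end
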